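(* Let $n\ge 2$, $A\in\mathrm{Mat}_{n\times n}(\mathbb{R})$, $q\in\mathbb{R}^n$ a formal equilibrium of the replicator field $X_A$, $B=-EAE^t$, $\eta_q(u)_i=q_i-\frac{e^{u_i}}{1+\sum_{j}e^{u_j}}$, and $\tilde Y_B(u)=(1+\sum_{i=1}^{n-1}e^{u_i})B\eta_q(u)$ on $\mathbb{R}^{n-1}$. Suppose $D=(d_{ij})\in\mathrm{Mat}_{(n-1)\times(n-1)}(\mathbb{R})$ is such that $DB$ is anti-symmetric and $D^tQ_1$ is diagonal, where $(Q_1)_{ij}=q_i-\delta_{ij}$, and let $H_D(u)=\sum_{i}\big(\sum_k d_{ki}q_k\big)u_i+\sum_i\big(\big(\sum_k d_{ki}q_k\big)-d_{ii}\big)e^{u_i}$. (1) If $B$ is invertible, then $\tilde Y_B$ is Hamiltonian with Hamiltonian $H_D$ with respect to the constant (pre)symplectic structure $\omega^\sharp=D^tB^{-1}$ (i.e. $\omega^\sharp\tilde Y_B=dH_D$); equivalently, the vector field $\frac{1}{x_n}X_A$ restricted to the interior of $\Delta^{n-1}$ is Hamiltonian with Hamiltonian $H_D\circ\phi^{-1}$ with respect to the presymplectic structure $\omega^\sharp=(d\phi^{-1})^tD^tB^{-1}(d\phi^{-1})$. (2) If $D^t$ is invertible, then $\tilde Y_B$ is Hamiltonian with Hamiltonian $H_D$ with respect to the constant Poisson structure $\pi^\sharp=B(D^t)^{-1}$ (i.e. $\tilde Y_B=\pi^\sharp dH_D$); equivalently, $\frac{1}{x_n}X_A$ restricted to the interior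 of $\Delta^{n-1}$ is Hamiltonian with Hamiltonian $H_D\circ\phi^{-1}$ with respect to the Poisson structure $\pi^\sharp=(d\phi)B(D^t)^{-1}(d\phi)^t$.
   Context: $X_A(x)_i=x_i((Ax)_i-x^tAx)$ on $\Delta^{n-1}=\{x\in\mathbb{R}^n_{\ge0}:\sum x_i=1\}$. A formal equilibrium is $q\in\mathbb{R}^n$ with $\sum q_i=1$ and all $(Aq)_i$ equal. $E=[-I_{n-1}\mid\mathbb{1}]$. $\phi:\mathbb{R}^{n-1}\to(\Delta^{n-1})^\circ$, $\phi(u)=\big(\frac{e^{u_1}}{1+\sum_j e^{u_j}},\dots,\frac{e^{u_{n-1}}}{1+\sum_j e^{u_j}},\frac{1}{1+\sum_j e^{u_j}}\big)$, a diffeomorphism with $\phi^{-1}(x)=(\log(x_i/x_n))_{i\le n-1}$; $d\phi$, $d\phi^{-1}$ denote Jacobians, and the structures on $(\Delta^{n-1})^\circ$ in the "equivalently" parts are the transports of the constant structures on $\mathbb{R}^{n-1}$ via $\phi$. For a 2-form $\omega$, $\omega^\sharp X=\omega(X,\cdot)$ and $X$ is Hamiltonian with Hamiltonian $H$ if $\omega^\sharp X=dH$; for a Poisson bivector $\pi$, $\pi^\sharp\alpha=\pi(\alpha,\cdot)$ and the Hamiltonian field of $H$ is $\pi^\sharp dH$. *)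

theory Defs
  imports "HOL-Analysis.Analysis"
begin

text \<open>Conventions: vectors in R^m are functions nat => real, only the entries with
index < m are meaningful; matrices are functions nat => nat => real, entry (i,j)
with 0-based indices.  The coordinate x_n of the paper is index n-1 here.\<close>

definition replicator :: "nat \<Rightarrow> (nat \<Rightarrow> nat \<Rightarrow> real) \<Rightarrow> (nat \<Rightarrow> real) \<Rightarrow> nat \<Rightarrow> real" where
  "replicator n A x i =
     x i * ((\<Sum>j<n. A i j * x j) - (\<Sum>k<n. \<Sum>j<n. x k * A k j * x j))"

definition formal_equilibrium :: "nat \<Rightarrow> (nat \<Rightarrow> nat \<Rightarrow> real) \<Rightarrow> (nat \<Rightarrow> real) \<Rightarrow> bool" where
  "formal_equilibrium n A q \<longleftrightarrow>
     (\<Sum>i<n. q i) = 1 \<and>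
     (\<forall>i<n. \<forall>j<n. (\<Sum>k<n. A i k * q k) = (\<Sum>k<n. A j k * q k))"

definition Emat :: "nat \<Rightarrow> nat \<Rightarrow> nat \<Rightarrow> real" where
  "Emat n i j = (if j = n - 1 then 1 else if i = j then -1 else 0)"

definition Bmat :: "nat \<Rightarrow> (nat \<Rightarrow> nat \<Rightarrow> real) \<Rightarrow> nat \<Rightarrow> nat \<Rightarrow> real" where
  "Bmat n A i j = - (\<Sum>k<n. \<Sum>l<n. Emat n i k * A k l * Emat n j l)"

definition eta :: "nat \<Rightarrow> (nat \<Rightarrow> real) \<Rightarrow> (nat \<Rightarrow> real) \<Rightarrow> nat \<Rightarrow> real" where
  "eta n q u i = q i - exp (u i) / (1 + (\<Sum>j<n - 1. exp (u j)))"

definition Ytilde :: "nat \<Rightarrow> (nat \<Rightarrow> nat \<Rightarrow> real) \<Rightarrow> (nat \<Rightarrow> real) \<Rightarrow> (nat \<Rightarrow> real) \<Rightarrow> nat \<Rightarrow> real" where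
  "Ytilde n A q u i =
     (1 + (\<Sum>j<n - 1. exp (u j))) * (\<Sum>j<n - 1. Bmat n A i j * eta n q u j)"

definition Q1 :: "(nat \<Rightarrow> real) \<Rightarrow> nat \<Rightarrow> nat \<Rightarrow> real" where
  "Q1 q i j = q i - (if i = j then 1 else 0)"

definition H_D :: "nat \<Rightarrow> (nat \<Rightarrow> nat \<Rightarrow> real) \<Rightarrow> (nat \<Rightarrow> real) \<Rightarrow> (nat \<Rightarrow> real) \<Rightarrow> real" where
  "H_D n D q u =
     (\<Sum>i<n - 1. (\<Sum>k<n - 1. D k i * q k) * u i) +
     (\<Sum>i<n - 1. ((\<Sum>k<n - 1. D k i * q k) - D i i) * exp (u i))"

definition phi :: "nat \<Rightarrow> (nat \<Rightarrow> real) \<Rightarrow> nat \<Rightarrow> real" where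
  "phi n u i =
     (if i < n - 1 then exp (u i) / (1 + (\<Sum>j<n - 1. exp (u j)))
      else if i = n - 1 then 1 / (1 + (\<Sum>j<n - 1. exp (u j)))
      else 0)"

definition phi_inv :: "nat \<Rightarrow> (nat \<Rightarrow> real) \<Rightarrow> nat \<Rightarrow> real" where
  "phi_inv n x i = (if i < n - 1 then ln (x i / x (n - 1)) else 0)"

definition simplex_interior :: "nat \<Rightarrow> (nat \<Rightarrow> real) set" where
  "simplex_interior n = {x. (\<forall>i<n. 0 < x i) \<and> (\<Sum>i<n. x i) = 1}"

definition partial_deriv :: "((nat \<Rightarrow> real) \<Rightarrow> real) \<Rightarrow> (nat \<Rightarrow> real) \<Rightarrow> nat \<Rightarrow> real" where
  "partial_deriv f p j = deriv (\<lambda>t. f (p(j := t))) (p j)"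

definition jacobian :: "((nat \<Rightarrow> real) \<Rightarrow> nat \<Rightarrow> real) \<Rightarrow> (nat \<Rightarrow> real) \<Rightarrow> nat \<Rightarrow> nat \<Rightarrow> real" where
  "jacobian F p i j = deriv (\<lambda>t. F (p(j := t)) i) (p j)"

definition is_inverse :: "nat \<Rightarrow> (nat \<Rightarrow> nat \<Rightarrow> real) \<Rightarrow> (nat \<Rightarrow> nat \<Rightarrow> real) \<Rightarrow> bool" where
  "is_inverse m M C \<longleftrightarrow>
     (\<forall>i<m. \<forall>j<m. (\<Sum>k<m. M i k * C k j) = (if i = j then 1 else 0)
                 \<and> (\<Sum>k<m. C i k * M k j) = (if i = j then 1 else 0))"

end

theory Submission
  imports Defs
begin

definition cc :: "nat \<Rightarrow> (nat \<Rightarrow> nat \<Rightarrow> real) \<Rightarrow> (nat \<Rightarrow> real) \<Rightarrow> nat \<Rightarrow> real" where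
  "cc n D q i = (\<Sum>k<n - 1. D k i * q k)"

definition dH :: "nat \<Rightarrow> (nat \<Rightarrow> nat \<Rightarrow> real) \<Rightarrow> (nat \<Rightarrow> real) \<Rightarrow> (nat \<Rightarrow> real) \<Rightarrow> nat \<Rightarrow> real" where
  "dH n D q u i = cc n D q i + (cc n D q i - D i i) * exp (u i)"

lemma H_chain:
  assumes "\<And>j. j < n - 1 \<Longrightarrow> ((\<lambda>t. P t j) has_real_derivative P' j) (at t0)"
  shows "((\<lambda>t. H_D n D q (P t)) has_real_derivative (\<Sum>j<n - 1. dH n D q (P t0) j * P' j)) (at t0)"
proof -
  have e: "((\<lambda>t. H_D n D q (P t)) has_real_derivative
     (\<Sum>j<n - 1. cc n D q j * P' j) + (\<Sum>j<n - 1. (cc n D q j - D j j) * (exp (P t0 j) * P' j))) (at t0)"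
    unfolding H_D_def cc_def[symmetric]
    apply (intro DERIV_add DERIV_sum)
    using assms by (auto intro!: DERIV_cmult DERIV_chain'[where g=exp])
  have "(\<Sum>j<n - 1. cc n D q j * P' j) + (\<Sum>j<n - 1. (cc n D q j - D j j) * (exp (P t0 j) * P' j))
     = (\<Sum>j<n - 1. dH n D q (P t0) j * P' j)"
    by (simp add: dH_def sum.distrib[symmetric] algebra_simps)
  with e show ?thesis by simp
qed

lemma upd_deriv: "((\<lambda>t. (u(a:=t)) j) has_real_derivative (if j = a then 1 else 0)) (at t0)"
  by (cases "j = a") auto

lemma pd_H: "i < n - 1 \<Longrightarrow> partial_deriv (H_D n D q) u i = dH n D q u i"
proof -
  assume i: "i < n - 1"
  have "((\<lambda>t. H_D n D q (u(i:=t))) has_real_derivative (\<Sum>j<n - 1. dH n D q (u(i:=u i)) j * (if j = i then 1 else 0))) (at (u i))"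
    by (rule H_chain) (rule upd_deriv)
  then have "((\<lambda>t. H_D n D q (u(i:=t))) has_real_derivative dH n D q u i) (at (u i))"
    using i by (simp add: if_distrib cong: if_cong)
  then show ?thesis unfolding partial_deriv_def by (rule DERIV_imp_deriv)
qed

definition Jv :: "nat \<Rightarrow> (nat \<Rightarrow> real) \<Rightarrow> nat \<Rightarrow> nat \<Rightarrow> real" where
  "Jv n x j i = (if j = i then 1 / x j else 0) - (if i = n - 1 then 1 / x (n - 1) else 0)"

lemma phi_inv_deriv:
  assumes pos: "\<forall>k<n. 0 < x k" and n: "n \<ge> 2" and i: "i < n" and j: "j < n - 1"
  shows "((\<lambda>t. phi_inv n (x(i:=t)) j) has_real_derivative Jv n x j i) (at (x i))"
proof -
  have xj: "x j > 0" and xn: "x (n - 1) > 0" using pos j n by auto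
  consider "i = j" | "i = n - 1" | "i \<noteq> j" "i \<noteq> n - 1" by blast
  then show ?thesis
  proof cases
    case 1
    have "((\<lambda>t. ln (t / x (n - 1))) has_real_derivative inverse (x j / x (n - 1)) * (1 / x (n - 1))) (at (x j))"
      using xj xn by (intro DERIV_chain'[where g=ln]) (auto intro!: derivative_eq_intros DERIV_ln)
    moreover have "inverse (x j / x (n - 1)) * (1 / x (n - 1)) = Jv n x j i"
      using 1 j xj xn by (auto simp: Jv_def field_simps)
    ultimately show ?thesis using 1 j unfolding phi_inv_def by simp
  next
    case 2
    have "((\<lambda>t. ln (x j / t)) has_real_derivative inverse (x j / x (n - 1)) * (- (x j) / (x (n - 1) * x (n - 1)))) (at (x (n - 1)))"
      using xj xn by (intro DERIV_chain'[where g=ln]) (auto intro!: derivative_eq_intros DERIV_ln)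
    moreover have "inverse (x j / x (n - 1)) * (- (x j) / (x (n - 1) * x (n - 1))) = Jv n x j i"
      using 2 j xj xn by (auto simp: Jv_def field_simps)
    ultimately show ?thesis using 2 j unfolding phi_inv_def by simp
  next
    case 3
    then show ?thesis using j unfolding phi_inv_def Jv_def by simp
  qed
qed

definition Jp :: "nat \<Rightarrow> (nat \<Rightarrow> real) \<Rightarrow> nat \<Rightarrow> nat \<Rightarrow> real" where
  "Jp n x i a = (if i < n - 1 then (if i = a then x i else 0) - x i * x a else - x (n - 1) * x a)"

lemma phi_deriv_u:
  fixes u :: "nat \<Rightarrow> real"
  assumes a: "a < n - 1" and i: "i < n"
  defines "s \<equiv> 1 + (\<Sum>j<n - 1. exp (u j))"
  shows "((\<lambda>t. phi n (u(a:=t)) i) has_real_derivative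
     (if i < n - 1 then ((if i = a then exp (u a) else 0) * s - exp (u i) * exp (u a)) / (s * s)
      else (0 * s - 1 * exp (u a)) / (s * s))) (at (u a))"
proof -
  have spos: "s > 0" unfolding s_def by (intro add_pos_nonneg sum_nonneg) auto
  have ds: "((\<lambda>t. 1 + (\<Sum>j<n - 1. exp ((u(a:=t)) j))) has_real_derivative exp (u a)) (at (u a))"
  proof -
    have "((\<lambda>t. 1 + (\<Sum>j<n - 1. exp ((u(a:=t)) j))) has_real_derivative
        0 + (\<Sum>j<n - 1. exp ((u(a:=u a)) j) * (if j = a then 1 else 0))) (at (u a))"
      by (intro DERIV_add DERIV_const DERIV_sum DERIV_chain'[where g=exp, OF upd_deriv] DERIV_exp)
    then show ?thesis using a by (simp add: if_distrib cong: if_cong)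
  qed
  have sa: "1 + (\<Sum>j<n - 1. exp ((u(a:=u a)) j)) = s" unfolding s_def by simp
  show ?thesis
  proof (cases "i < n - 1")
    case True
    have dn: "((\<lambda>t. exp ((u(a:=t)) i)) has_real_derivative (if i = a then exp (u a) else 0)) (at (u a))"
    proof -
      have "((\<lambda>t. exp ((u(a:=t)) i)) has_real_derivative exp ((u(a:=u a)) i) * (if i = a then 1 else 0)) (at (u a))"
        by (intro DERIV_chain'[where g=exp, OF upd_deriv] DERIV_exp)
      then show ?thesis by (simp split: if_splits)
    qed
    have "((\<lambda>t. exp ((u(a:=t)) i) / (1 + (\<Sum>j<n - 1. exp ((u(a:=t)) j)))) has_real_derivative
       ((if i = a then exp (u a) else 0) * s - exp (u i) * exp (u a)) / (s * s)) (at (u a))"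
      using DERIV_divide[OF dn ds] spos sa by simp
    then show ?thesis using True unfolding phi_def by simp
  next
    case False
    with i have "i = n - 1" by simp
    have "((\<lambda>t. 1 / (1 + (\<Sum>j<n - 1. exp ((u(a:=t)) j)))) has_real_derivative
       (0 * s - 1 * exp (u a)) / (s * s)) (at (u a))"
      using DERIV_divide[OF DERIV_const[of "1::real"] ds] spos sa by simp
    then show ?thesis using False \<open>i = n - 1\<close> unfolding phi_def by simp
  qed
qed

lemma exp_phi_inv:
  assumes "x \<in> simplex_interior n" "n \<ge> 2" "j < n - 1"
  shows "exp (phi_inv n x j) = x j / x (n - 1)"
  using assms unfolding simplex_interior_def phi_inv_def by auto

lemma s_phi_inv:
  assumes x: "x \<in> simplex_interior n" and n: "n \<ge> 2"
  shows "1 + (\<Sum>j<n - 1. exp (phi_inv n x j)) = 1 / x (n - 1)"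
proof -
  have xn: "x (n - 1) > 0" using x n unfolding simplex_interior_def by auto
  have "(\<Sum>j<n - 1. exp (phi_inv n x j)) = (\<Sum>j<n - 1. x j / x (n - 1))"
    using exp_phi_inv[OF x n] by simp
  also have "\<dots> = (\<Sum>j<n - 1. x j) / x (n - 1)" by (simp add: sum_divide_distrib)
  also have "(\<Sum>j<n - 1. x j) = 1 - x (n - 1)"
  proof -
    have "n = Suc (n - 1)" using n by simp
    then have "(\<Sum>j<n. x j) = (\<Sum>j<n - 1. x j) + x (n - 1)"
      by (metis sum.lessThan_Suc diff_Suc_1)
    then show ?thesis using x unfolding simplex_interior_def by simp
  qed
  finally show ?thesis using xn by (simp add: field_simps)
qed

lemma phi_jac:
  assumes x: "x \<in> simplex_interior n" and n: "n \<ge> 2" and i: "i < n" and a: "a < n - 1"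
  shows "jacobian (phi n) (phi_inv n x) i a = Jp n x i a"
proof -
  let ?u = "phi_inv n x"
  have xn: "x (n - 1) > 0" using x n unfolding simplex_interior_def by auto
  have "deriv (\<lambda>t. phi n (?u(a:=t)) i) (?u a) =
     (if i < n - 1 then ((if i = a then exp (?u a) else 0) * (1 / x (n - 1)) - exp (?u i) * exp (?u a)) / ((1 / x (n - 1)) * (1 / x (n - 1)))
      else (0 * (1 / x (n - 1)) - 1 * exp (?u a)) / ((1 / x (n - 1)) * (1 / x (n - 1))))"
    using DERIV_imp_deriv[OF phi_deriv_u[OF a i, of ?u]] s_phi_inv[OF x n] by simp
  also have "\<dots> = Jp n x i a"
    using exp_phi_inv[OF x n] a xn unfolding Jp_def by (auto simp: field_simps)
  finally show ?thesis unfolding jacobian_def .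
qed

lemma phi_inv_jac:
  assumes x: "x \<in> simplex_interior n" and n: "n \<ge> 2" and i: "i < n" and j: "j < n - 1"
  shows "jacobian (phi_inv n) x j i = Jv n x j i"
  unfolding jacobian_def
  by (rule DERIV_imp_deriv, rule phi_inv_deriv) (use x n i j in \<open>auto simp: simplex_interior_def\<close>)

lemma pd_Hphi:
  assumes x: "x \<in> simplex_interior n" and n: "n \<ge> 2" and i: "i < n"
  shows "partial_deriv (\<lambda>y. H_D n D q (phi_inv n y)) x i = (\<Sum>j<n - 1. dH n D q (phi_inv n x) j * Jv n x j i)"
proof -
  have "((\<lambda>t. H_D n D q (phi_inv n (x(i:=t)))) has_real_derivative (\<Sum>j<n - 1. dH n D q (phi_inv n (x(i:=x i))) j * Jv n x j i)) (at (x i))"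
    by (rule H_chain, rule phi_inv_deriv) (use x n i in \<open>auto simp: simplex_interior_def\<close>)
  then show ?thesis unfolding partial_deriv_def by (simp add: DERIV_imp_deriv)
qed

lemma R1:
  fixes f :: "nat \<Rightarrow> real"
  shows "(\<Sum>j\<in>J. (\<Sum>a\<in>S. \<Sum>b\<in>S. \<Sum>c\<in>S. f a * g b a * h b c * k c j) * w j)
    = (\<Sum>a\<in>S. f a * (\<Sum>b\<in>S. g b a * (\<Sum>c\<in>S. h b c * (\<Sum>j\<in>J. k c j * w j))))"
proof -
  have "(\<Sum>j\<in>J. (\<Sum>a\<in>S. \<Sum>b\<in>S. \<Sum>c\<in>S. f a * g b a * h b c * k c j) * w j)
     = (\<Sum>j\<in>J. \<Sum>a\<in>S. \<Sum>b\<in>S. \<Sum>c\<in>S. f a * g b a * h b c * k c j * w j)"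
    by (simp add: sum_distrib_right)
  also have "\<dots> = (\<Sum>a\<in>S. \<Sum>j\<in>J. \<Sum>b\<in>S. \<Sum>c\<in>S. f a * g b a * h b c * k c j * w j)"
    by (rule sum.swap)
  also have "\<dots> = (\<Sum>a\<in>S. \<Sum>b\<in>S. \<Sum>j\<in>J. \<Sum>c\<in>S. f a * g b a * h b c * k c j * w j)"
    by (intro sum.cong refl sum.swap)
  also have "\<dots> = (\<Sum>a\<in>S. \<Sum>b\<in>S. \<Sum>c\<in>S. \<Sum>j\<in>J. f a * g b a * h b c * k c j * w j)"
    by (intro sum.cong refl sum.swap)
  also have "\<dots> = (\<Sum>a\<in>S. f a * (\<Sum>b\<in>S. g b a * (\<Sum>c\<in>S. h b c * (\<Sum>j\<in>J. k c j * w j))))"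
    by (simp add: sum_distrib_left mult.assoc)
  finally show ?thesis .
qed

lemma R2:
  fixes f :: "nat \<Rightarrow> real"
  shows "(\<Sum>j\<in>J. (\<Sum>a\<in>S. \<Sum>b\<in>S. \<Sum>c\<in>S. f a * B a b * C b c * g j c) * (\<Sum>d\<in>S. h d * K d j))
    = (\<Sum>a\<in>S. f a * (\<Sum>b\<in>S. B a b * (\<Sum>c\<in>S. C b c * (\<Sum>d\<in>S. h d * (\<Sum>j\<in>J. g j c * K d j)))))"
proof -
  have "(\<Sum>j\<in>J. (\<Sum>a\<in>S. \<Sum>b\<in>S. \<Sum>c\<in>S. f a * B a b * C b c * g j c) * (\<Sum>d\<in>S. h d * K d j))
     = (\<Sum>j\<in>J. \<Sum>a\<in>S. \<Sum>b\<in>S. \<Sum>c\<in>S. \<Sum>d\<in>S. f a * B a b * C b c * h d * (g j c * K d j))"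
    by (simp add: sum_distrib_right sum_distrib_left mult_ac)
  also have "\<dots> = (\<Sum>a\<in>S. \<Sum>j\<in>J. \<Sum>b\<in>S. \<Sum>c\<in>S. \<Sum>d\<in>S. f a * B a b * C b c * h d * (g j c * K d j))"
    by (rule sum.swap)
  also have "\<dots> = (\<Sum>a\<in>S. \<Sum>b\<in>S. \<Sum>j\<in>J. \<Sum>c\<in>S. \<Sum>d\<in>S. f a * B a b * C b c * h d * (g j c * K d j))"
    by (intro sum.cong refl sum.swap)
  also have "\<dots> = (\<Sum>a\<in>S. \<Sum>b\<in>S. \<Sum>c\<in>S. \<Sum>j\<in>J. \<Sum>d\<in>S. f a * B a b * C b c * h d * (g j c * K d j))"
    by (intro sum.cong refl sum.swap)
  also have "\<dots> = (\<Sum>a\<in>S. \<Sum>b\<in>S. \<Sum>c\<in>S. \<Sum>d\<in>S. \<Sum>j\<in>J. f a * B a b * C b c * h d * (g j c * K d j))"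
    by (intro sum.cong refl sum.swap)
  also have "\<dots> = (\<Sum>a\<in>S. f a * (\<Sum>b\<in>S. B a b * (\<Sum>c\<in>S. C b c * (\<Sum>d\<in>S. h d * (\<Sum>j\<in>J. g j c * K d j)))))"
    by (simp add: sum_distrib_left mult.assoc)
  finally show ?thesis .
qed

lemma inv_left:
  assumes "is_inverse m M C" "j < m"
  shows "(\<Sum>k<m. C j k * (\<Sum>l<m. M k l * v l)) = v j"
proof -
  have "(\<Sum>k<m. C j k * (\<Sum>l<m. M k l * v l)) = (\<Sum>l<m. (\<Sum>k<m. C j k * M k l) * v l)"
    by (simp only: sum_distrib_left sum_distrib_right mult.assoc) (rule sum.swap)
  also have "\<dots> = (\<Sum>l<m. (if j = l then 1 else 0) * v l)"
    using assms unfolding is_inverse_def by (intro sum.cong) auto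
  also have "\<dots> = (\<Sum>l<m. if j = l then v l else 0)" by (intro sum.cong) auto
  finally show ?thesis using assms(2) by simp
qed

lemma inv_right:
  assumes "is_inverse m M C" "j < m"
  shows "(\<Sum>k<m. M j k * (\<Sum>l<m. C k l * v l)) = v j"
proof -
  have "(\<Sum>k<m. M j k * (\<Sum>l<m. C k l * v l)) = (\<Sum>l<m. (\<Sum>k<m. M j k * C k l) * v l)"
    by (simp only: sum_distrib_left sum_distrib_right mult.assoc) (rule sum.swap)
  also have "\<dots> = (\<Sum>l<m. (if j = l then 1 else 0) * v l)"
    using assms unfolding is_inverse_def by (intro sum.cong) auto
  also have "\<dots> = (\<Sum>l<m. if j = l then v l else 0)" by (intro sum.cong) auto
  finally show ?thesis using assms(2) by simp
qed

lemma K1: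
  assumes diag: "\<forall>i<n - 1. \<forall>j<n - 1. i \<noteq> j \<longrightarrow> (\<Sum>k<n - 1. D k i * Q1 q k j) = 0"
    and i: "i < n - 1"
  shows "(1 + (\<Sum>j<n - 1. exp (u j))) * (\<Sum>j<n - 1. D j i * eta n q u j) = dH n D q u i"
proof -
  define s where "s = 1 + (\<Sum>j<n - 1. exp (u j))"
  have spos: "s > 0" unfolding s_def by (intro add_pos_nonneg sum_nonneg) auto
  have Dj: "D j i = cc n D q i" if j: "j < n - 1" "j \<noteq> i" for j
  proof -
    have "(\<Sum>k<n - 1. D k i * Q1 q k j) = (\<Sum>k<n - 1. D k i * q k - (if k = j then D k i else 0))"
      unfolding Q1_def by (intro sum.cong) (auto simp: algebra_simps)
    also have "\<dots> = cc n D q i - D j i" using j by (simp add: sum_subtractf cc_def)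
    finally show ?thesis using diag i j by auto
  qed
  have e1: "D j i * exp (u j) = cc n D q i * exp (u j) + (if j = i then (D i i - cc n D q i) * exp (u i) else 0)"
    if "j < n - 1" for j using Dj[OF that] by (cases "j = i") (auto simp: algebra_simps)
  have "(\<Sum>j<n - 1. D j i * exp (u j)) = (\<Sum>j<n - 1. cc n D q i * exp (u j) + (if j = i then (D i i - cc n D q i) * exp (u i) else 0))"
    using e1 by (intro sum.cong) auto
  also have "\<dots> = cc n D q i * (s - 1) + (D i i - cc n D q i) * exp (u i)"
    using i by (simp add: sum.distrib sum_distrib_left[symmetric] s_def)
  finally have S: "(\<Sum>j<n - 1. D j i * exp (u j)) = cc n D q i * (s - 1) + (D i i - cc n D q i) * exp (u i)" .
  have "s * (\<Sum>j<n - 1. D j i * eta n q u j) = s * (\<Sum>j<n - 1. D j i * q j) - (\<Sum>j<n - 1. D j i * exp (u j))"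
  proof -
    have "s * (D j i * eta n q u j) = s * (D j i * q j) - D j i * exp (u j)" for j
      unfolding eta_def s_def[symmetric] using spos by (simp add: field_simps)
    then show ?thesis by (simp add: sum_distrib_left sum_subtractf)
  qed
  also have "\<dots> = dH n D q u i" unfolding S dH_def cc_def[symmetric]
    by (simp add: cc_def algebra_simps)
  finally show ?thesis unfolding s_def .
qed

lemma E_sum:
  assumes "n = Suc m" "c < m"
  shows "(\<Sum>k<n. Emat n c k * f k) = f m - f c"
proof -
  have "(\<Sum>k<n. Emat n c k * f k) = (\<Sum>k<m. Emat n c k * f k) + f m"
    using assms by (simp add: Emat_def)
  also have "(\<Sum>k<m. Emat n c k * f k) = (\<Sum>k<m. if k = c then - f c else 0)"
    using assms by (intro sum.cong) (auto simp: Emat_def)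
  finally show ?thesis using assms by simp
qed

lemma B_formula:
  assumes "n = Suc m" "c < m" "l < m"
  shows "Bmat n A c l = - (A m m - A m l - A c m + A c l)"
proof -
  have "Bmat n A c l = - (\<Sum>k<n. Emat n c k * (\<Sum>j<n. Emat n l j * A k j))"
    unfolding Bmat_def by (simp add: sum_distrib_left mult_ac)
  also have "\<dots> = - ((\<Sum>j<n. Emat n l j * A m j) - (\<Sum>j<n. Emat n l j * A c j))"
    using E_sum[OF assms(1,2)] by simp
  also have "\<dots> = - (A m m - A m l - A c m + A c l)"
    using E_sum[OF assms(1,3)] by simp
  finally show ?thesis .
qed

lemma B_apply:
  assumes n: "n = Suc m" and c: "c < m" and w: "(\<Sum>l<n. w l) = 0"
  shows "(\<Sum>l<m. Bmat n A c l * w l) = (\<Sum>k<n. A m k * w k) - (\<Sum>k<n. A c k * w k)"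
proof -
  have W: "(\<Sum>l<m. w l) = - w m" using w n by simp
  have "(\<Sum>l<m. Bmat n A c l * w l) = (\<Sum>l<m. - (A m m - A c m) * w l + A m l * w l - A c l * w l)"
  proof (intro sum.cong refl)
    fix l assume "l \<in> {..<m}"
    then show "Bmat n A c l * w l = - (A m m - A c m) * w l + A m l * w l - A c l * w l"
    proof -
      have bf: "Bmat n A c l = - (A m m - A m l - A c m + A c l)" using B_formula[OF n c, of l A] \<open>l \<in> {..<m}\<close> by simp
      show ?thesis unfolding bf by (simp add: algebra_simps)
    qed
  qed
  also have "\<dots> = - (A m m - A c m) * (\<Sum>l<m. w l) + (\<Sum>l<m. A m l * w l) - (\<Sum>l<m. A c l * w l)"
    by (simp add: sum.distrib sum_subtractf sum_distrib_left)
  also have "\<dots> = (\<Sum>k<n. A m k * w k) - (\<Sum>k<n. A c k * w k)"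
    unfolding W using n by (simp add: algebra_simps)
  finally show ?thesis .
qed

lemma Jv_sum:
  assumes n: "n = Suc m" and c: "c < m"
  shows "(\<Sum>j<n. Jv n x c j * f j) = f c / x c - f m / x m"
proof -
  have "(\<Sum>j<n. Jv n x c j * f j) = (\<Sum>j<n. (if c = j then f c / x c else 0) - (if j = m then f m / x m else 0))"
    using n by (intro sum.cong) (auto simp: Jv_def)
  also have "\<dots> = f c / x c - f m / x m" using n c by (simp add: sum_subtractf)
  finally show ?thesis .
qed

lemma Ytilde_x:
  assumes x: "x \<in> simplex_interior n" and n: "n = Suc m" "m \<ge> 1" and c: "c < m"
    and eq: "formal_equilibrium n A q"
  shows "Ytilde n A q (phi_inv n x) c = ((\<Sum>j<n. A c j * x j) - (\<Sum>j<n. A m j * x j)) / x m"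
proof -
  have n2: "n \<ge> 2" using n by simp
  have xn: "x m > 0" using x n unfolding simplex_interior_def by auto
  have s: "1 + (\<Sum>j<n - 1. exp (phi_inv n x j)) = 1 / x m" using s_phi_inv[OF x n2] n by simp
  have et: "eta n q (phi_inv n x) l = q l - x l" if "l < m" for l
    using exp_phi_inv[OF x n2, of l] that n xn unfolding eta_def s by simp
  have w: "(\<Sum>l<n. q l - x l) = 0" using x eq unfolding simplex_interior_def formal_equilibrium_def
    by (simp add: sum_subtractf)
  have "Ytilde n A q (phi_inv n x) c = (1 / x m) * (\<Sum>l<m. Bmat n A c l * (q l - x l))"
    unfolding Ytilde_def s using n et by simp
  also have "(\<Sum>l<m. Bmat n A c l * (q l - x l)) = (\<Sum>k<n. A m k * (q k - x k)) - (\<Sum>k<n. A c k * (q k - x k))"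
    by (rule B_apply[OF n(1) c w])
  also have "\<dots> = ((\<Sum>k<n. A m k * q k) - (\<Sum>k<n. A c k * q k)) + ((\<Sum>j<n. A c j * x j) - (\<Sum>j<n. A m j * x j))"
    by (simp add: right_diff_distrib sum_subtractf)
  also have "(\<Sum>k<n. A m k * q k) - (\<Sum>k<n. A c k * q k) = 0"
    using eq c n unfolding formal_equilibrium_def by auto
  finally show ?thesis by simp
qed

lemma K2:
  assumes x: "x \<in> simplex_interior n" and n: "n = Suc m" "m \<ge> 1" and c: "c < m"
    and eq: "formal_equilibrium n A q"
  shows "(\<Sum>j<n. Jv n x c j * (replicator n A x j / x (n - 1))) = Ytilde n A q (phi_inv n x) c"
proof -
  have xn: "x m > 0" and xc: "x c > 0" using x n c unfolding simplex_interior_def by auto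
  show ?thesis unfolding Ytilde_x[OF assms] Jv_sum[OF n(1) c] using n xn xc
    by (simp add: replicator_def field_simps)
qed

lemma K3:
  assumes x: "x \<in> simplex_interior n" and n: "n = Suc m" and c: "c < m" and d: "d < m"
  shows "(\<Sum>j<n. Jp n x j c * Jv n x d j) = (if d = c then 1 else 0)"
proof -
  have xn: "x m > 0" and xd: "x d > 0" using x n d unfolding simplex_interior_def by auto
  have "(\<Sum>j<n. Jp n x j c * Jv n x d j) = (\<Sum>j<n. Jv n x d j * Jp n x j c)" by (simp add: mult.commute)
  also have "\<dots> = Jp n x d c / x d - Jp n x m c / x m" by (rule Jv_sum[OF n d])
  also have "\<dots> = (if d = c then 1 else 0)" using xn xd n d unfolding Jp_def by (auto simp: field_simps)
  finally show ?thesis .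
qed

lemma K4:
  assumes x: "x \<in> simplex_interior n" and n: "n = Suc m" "m \<ge> 1" and i: "i < n"
    and eq: "formal_equilibrium n A q"
  shows "(\<Sum>a<n - 1. Jp n x i a * Ytilde n A q (phi_inv n x) a) = replicator n A x i / x (n - 1)"
proof -
  define y where "y k = (\<Sum>j<n. A k j * x j)" for k
  define Q where "Q = (\<Sum>k<n. \<Sum>j<n. x k * A k j * x j)"
  have xn: "x m > 0" using x n unfolding simplex_interior_def by auto
  have Qy: "Q = (\<Sum>k<n. x k * y k)" unfolding Q_def y_def by (simp add: sum_distrib_left mult.assoc)
  have Sx: "(\<Sum>a<m. x a) = 1 - x m" using x n unfolding simplex_interior_def by simp
  have Sxy: "(\<Sum>a<m. x a * y a) = Q - x m * y m" using Qy n by simp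
  have key: "(\<Sum>a<m. x a * (y a - y m)) = Q - y m"
    by (simp add: right_diff_distrib sum_subtractf sum_distrib_right[symmetric] Sx Sxy algebra_simps)
  have R: "replicator n A x i = x i * (y i - Q)" unfolding replicator_def y_def Q_def by simp
  have Y: "Ytilde n A q (phi_inv n x) a = (y a - y m) / x m" if "a < m" for a
    using Ytilde_x[OF x n that eq] unfolding y_def by simp
  have "(\<Sum>a<n - 1. Jp n x i a * Ytilde n A q (phi_inv n x) a) = (\<Sum>a<m. Jp n x i a * ((y a - y m) / x m))"
    using n Y by simp
  also have "\<dots> = replicator n A x i / x (n - 1)"
  proof (cases "i < m")
    case True
    have "(\<Sum>a<m. Jp n x i a * ((y a - y m) / x m)) = (\<Sum>a<m. (if i = a then x i * ((y i - y m) / x m) else 0) - x i / x m * (x a * (y a - y m)))"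
      using n True xn by (intro sum.cong) (auto simp: Jp_def field_simps)
    also have "\<dots> = x i * ((y i - y m) / x m) - x i / x m * (Q - y m)"
      using True by (simp add: sum_subtractf sum_distrib_left[symmetric] key del: times_divide_eq_left times_divide_eq_right)
    finally show ?thesis using xn n unfolding R by (simp add: field_simps)
  next
    case False
    then have im: "i = m" using i n by simp
    have "(\<Sum>a<m. Jp n x i a * ((y a - y m) / x m)) = (\<Sum>a<m. - (x a * (y a - y m)))"
      using n im xn by (intro sum.cong) (auto simp: Jp_def)
    also have "\<dots> = y m - Q" by (simp add: sum_negf key)
    moreover have "replicator n A x i / x (n - 1) = y m - Q" using xn n im unfolding R by simp
    ultimately show ?thesis by simp
  qed
  finally show ?thesis .
qed

lemma P1a:
  assumes diag: "\<forall>i<n - 1. \<forall>j<n - 1. i \<noteq> j \<longrightarrow> (\<Sum>k<n - 1. D k i * Q1 q k j) = 0"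
    and inv: "is_inverse (n - 1) (Bmat n A) C" and i: "i < n - 1"
  shows "(\<Sum>j<n - 1. \<Sum>k<n - 1. D j i * C j k * Ytilde n A q u k) = dH n D q u i"
proof -
  define s where "s = 1 + (\<Sum>j<n - 1. exp (u j))"
  have "(\<Sum>j<n - 1. \<Sum>k<n - 1. D j i * C j k * Ytilde n A q u k)
      = (\<Sum>j<n - 1. D j i * (s * (\<Sum>k<n - 1. C j k * (\<Sum>l<n - 1. Bmat n A k l * eta n q u l))))"
    unfolding Ytilde_def s_def[symmetric] by (simp add: sum_distrib_left mult_ac)
  also have "\<dots> = (\<Sum>j<n - 1. D j i * (s * eta n q u j))"
    using inv_left[OF inv] by (intro sum.cong) auto
  also have "\<dots> = s * (\<Sum>j<n - 1. D j i * eta n q u j)" by (simp add: sum_distrib_left mult_ac)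
  also have "\<dots> = dH n D q u i" unfolding s_def by (rule K1[OF diag i])
  finally show ?thesis .
qed

lemma P2a:
  assumes diag: "\<forall>i<n - 1. \<forall>j<n - 1. i \<noteq> j \<longrightarrow> (\<Sum>k<n - 1. D k i * Q1 q k j) = 0"
    and inv: "is_inverse (n - 1) (\<lambda>i j. D j i) C" and i: "i < n - 1"
  shows "(\<Sum>j<n - 1. \<Sum>k<n - 1. Bmat n A i j * C j k * dH n D q u k) = Ytilde n A q u i"
proof -
  define s where "s = 1 + (\<Sum>j<n - 1. exp (u j))"
  have dh: "dH n D q u k = (\<Sum>l<n - 1. D l k * (s * eta n q u l))" if "k < n - 1" for k
    using K1[OF diag that, of u] unfolding s_def[symmetric] by (simp add: sum_distrib_left mult_ac)
  have "(\<Sum>j<n - 1. \<Sum>k<n - 1. Bmat n A i j * C j k * dH n D q u k)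
     = (\<Sum>j<n - 1. Bmat n A i j * (\<Sum>k<n - 1. C j k * (\<Sum>l<n - 1. D l k * (s * eta n q u l))))"
    using dh by (simp add: sum_distrib_left mult_ac)
  also have "\<dots> = (\<Sum>j<n - 1. Bmat n A i j * (s * eta n q u j))"
    using inv_left[OF inv, where v = "\<lambda>l. s * eta n q u l"] by (intro sum.cong) auto
  also have "\<dots> = Ytilde n A q u i" unfolding Ytilde_def s_def[symmetric] by (simp add: sum_distrib_left mult_ac)
  finally show ?thesis .
qed

theorem corollary4p7:
  fixes n :: nat and A D :: "nat \<Rightarrow> nat \<Rightarrow> real" and q :: "nat \<Rightarrow> real"
  assumes "n \<ge> 2"
    and "formal_equilibrium n A q"
    and antisym: "\<forall>i<n - 1. \<forall>j<n - 1.
            (\<Sum>k<n - 1. D i k * Bmat n A k j) = - (\<Sum>k<n - 1. D j k * Bmat n A k i)"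
    and diag: "\<forall>i<n - 1. \<forall>j<n - 1. i \<noteq> j \<longrightarrow> (\<Sum>k<n - 1. D k i * Q1 q k j) = 0"
  shows
    "(\<forall>C. is_inverse (n - 1) (Bmat n A) C \<longrightarrow>
        (\<forall>u. \<forall>i<n - 1.
           (\<Sum>j<n - 1. \<Sum>k<n - 1. D j i * C j k * Ytilde n A q u k)
             = partial_deriv (H_D n D q) u i)
      \<and> (\<forall>x\<in>simplex_interior n. \<forall>i<n.
           (let J = jacobian (phi_inv n) x in
            (\<Sum>j<n. (\<Sum>a<n - 1. \<Sum>b<n - 1. \<Sum>c<n - 1. J a i * D b a * C b c * J c j)
                      * (replicator n A x j / x (n - 1))))
             = partial_deriv (\<lambda>y. H_D n D q (phi_inv n y)) x i))
   \<and> (\<forall>C. is_inverse (n - 1) (\<lambda>i j. D j i) C \<longrightarrow>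
        (\<forall>u. \<forall>i<n - 1.
           Ytilde n A q u i
             = (\<Sum>j<n - 1. \<Sum>k<n - 1. Bmat n A i j * C j k * partial_deriv (H_D n D q) u k))
      \<and> (\<forall>x\<in>simplex_interior n. \<forall>i<n.
           replicator n A x i / x (n - 1)
             = (let J = jacobian (phi n) (phi_inv n x) in
                (\<Sum>j<n. (\<Sum>a<n - 1. \<Sum>b<n - 1. \<Sum>c<n - 1. J i a * Bmat n A a b * C b c * J j c)
                         * partial_deriv (\<lambda>y. H_D n D q (phi_inv n y)) x j))))"
proof -
  obtain m where n: "n = Suc m" and m1: "m \<ge> 1" using assms(1) by (cases n) auto
  have n2: "n \<ge> 2" by fact
  have nm: "n - 1 = m" using n by simp
  note eq = assms(2)
  have part1: "(\<forall>u. \<forall>i<n - 1.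
           (\<Sum>j<n - 1. \<Sum>k<n - 1. D j i * C j k * Ytilde n A q u k)
             = partial_deriv (H_D n D q) u i)
      \<and> (\<forall>x\<in>simplex_interior n. \<forall>i<n.
           (let J = jacobian (phi_inv n) x in
            (\<Sum>j<n. (\<Sum>a<n - 1. \<Sum>b<n - 1. \<Sum>c<n - 1. J a i * D b a * C b c * J c j)
                      * (replicator n A x j / x (n - 1))))
             = partial_deriv (\<lambda>y. H_D n D q (phi_inv n y)) x i)"
    if inv: "is_inverse (n - 1) (Bmat n A) C" for C
  proof
    show "\<forall>u. \<forall>i<n - 1. (\<Sum>j<n - 1. \<Sum>k<n - 1. D j i * C j k * Ytilde n A q u k)
             = partial_deriv (H_D n D q) u i"
      using P1a[OF diag inv] pd_H by simp
  next
    show "\<forall>x\<in>simplex_interior n. \<forall>i<n.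
           (let J = jacobian (phi_inv n) x in
            (\<Sum>j<n. (\<Sum>a<n - 1. \<Sum>b<n - 1. \<Sum>c<n - 1. J a i * D b a * C b c * J c j)
                      * (replicator n A x j / x (n - 1))))
             = partial_deriv (\<lambda>y. H_D n D q (phi_inv n y)) x i"
    proof (intro ballI allI impI)
      fix x i assume x: "x \<in> simplex_interior n" and i: "i < n"
      have "(\<Sum>j<n. (\<Sum>a<n - 1. \<Sum>b<n - 1. \<Sum>c<n - 1. jacobian (phi_inv n) x a i * D b a * C b c * jacobian (phi_inv n) x c j)
                      * (replicator n A x j / x (n - 1)))
          = (\<Sum>j<n. (\<Sum>a<n - 1. \<Sum>b<n - 1. \<Sum>c<n - 1. Jv n x a i * D b a * C b c * Jv n x c j)
                      * (replicator n A x j / x (n - 1)))"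
        using phi_inv_jac[OF x n2] i by (intro sum.cong refl arg_cong2[where f=times]) auto
      also have "\<dots> = (\<Sum>a<n - 1. Jv n x a i * (\<Sum>b<n - 1. D b a * (\<Sum>c<n - 1. C b c *
                (\<Sum>j<n. Jv n x c j * (replicator n A x j / x (n - 1))))))"
        by (rule R1)
      also have "\<dots> = (\<Sum>a<n - 1. Jv n x a i * (\<Sum>b<n - 1. D b a * (\<Sum>c<n - 1. C b c *
                Ytilde n A q (phi_inv n x) c)))"
        using K2[OF x n m1 _ eq] nm by simp
      also have "\<dots> = (\<Sum>a<n - 1. Jv n x a i * dH n D q (phi_inv n x) a)"
        using P1a[OF diag inv] by (intro sum.cong refl) (simp add: sum_distrib_left mult_ac)
      also have "\<dots> = partial_deriv (\<lambda>y. H_D n D q (phi_inv n y)) x i"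
        using pd_Hphi[OF x n2 i] by (simp add: mult.commute)
      finally show "(let J = jacobian (phi_inv n) x in
            (\<Sum>j<n. (\<Sum>a<n - 1. \<Sum>b<n - 1. \<Sum>c<n - 1. J a i * D b a * C b c * J c j)
                      * (replicator n A x j / x (n - 1))))
             = partial_deriv (\<lambda>y. H_D n D q (phi_inv n y)) x i" by (simp add: Let_def)
    qed
  qed
  have part2: "(\<forall>u. \<forall>i<n - 1.
           Ytilde n A q u i
             = (\<Sum>j<n - 1. \<Sum>k<n - 1. Bmat n A i j * C j k * partial_deriv (H_D n D q) u k))
      \<and> (\<forall>x\<in>simplex_interior n. \<forall>i<n.
           replicator n A x i / x (n - 1)
             = (let J = jacobian (phi n) (phi_inv n x) in
                (\<Sum>j<n. (\<Sum>a<n - 1. \<Sum>b<n - 1. \<Sum>c<n - 1. J i a * Bmat n A a b * C b c * J j c)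
                         * partial_deriv (\<lambda>y. H_D n D q (phi_inv n y)) x j)))"
    if inv: "is_inverse (n - 1) (\<lambda>i j. D j i) C" for C
  proof
    show "\<forall>u. \<forall>i<n - 1.
           Ytilde n A q u i
             = (\<Sum>j<n - 1. \<Sum>k<n - 1. Bmat n A i j * C j k * partial_deriv (H_D n D q) u k)"
      using P2a[OF diag inv] pd_H by simp
  next
    show "\<forall>x\<in>simplex_interior n. \<forall>i<n.
           replicator n A x i / x (n - 1)
             = (let J = jacobian (phi n) (phi_inv n x) in
                (\<Sum>j<n. (\<Sum>a<n - 1. \<Sum>b<n - 1. \<Sum>c<n - 1. J i a * Bmat n A a b * C b c * J j c)
                         * partial_deriv (\<lambda>y. H_D n D q (phi_inv n y)) x j))"
    proof (intro ballI allI impI)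
      fix x i assume x: "x \<in> simplex_interior n" and i: "i < n"
      have "(\<Sum>j<n. (\<Sum>a<n - 1. \<Sum>b<n - 1. \<Sum>c<n - 1. jacobian (phi n) (phi_inv n x) i a * Bmat n A a b * C b c * jacobian (phi n) (phi_inv n x) j c)
                         * partial_deriv (\<lambda>y. H_D n D q (phi_inv n y)) x j)
          = (\<Sum>j<n. (\<Sum>a<n - 1. \<Sum>b<n - 1. \<Sum>c<n - 1. Jp n x i a * Bmat n A a b * C b c * Jp n x j c)
                         * (\<Sum>d<n - 1. dH n D q (phi_inv n x) d * Jv n x d j))"
        using phi_jac[OF x n2] pd_Hphi[OF x n2] i by (intro sum.cong refl arg_cong2[where f=times]) auto
      also have "\<dots> = (\<Sum>a<n - 1. Jp n x i a * (\<Sum>b<n - 1. Bmat n A a b * (\<Sum>c<n - 1. C b c *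
            (\<Sum>d<n - 1. dH n D q (phi_inv n x) d * (\<Sum>j<n. Jp n x j c * Jv n x d j)))))"
        by (rule R2)
      also have "\<dots> = (\<Sum>a<n - 1. Jp n x i a * (\<Sum>b<n - 1. Bmat n A a b * (\<Sum>c<n - 1. C b c *
            dH n D q (phi_inv n x) c)))"
      proof -
        have inner: "(\<Sum>d<n - 1. dH n D q (phi_inv n x) d * (\<Sum>j<n. Jp n x j c * Jv n x d j)) = dH n D q (phi_inv n x) c"
          if c: "c < n - 1" for c
        proof -
          have "(\<Sum>d<n - 1. dH n D q (phi_inv n x) d * (\<Sum>j<n. Jp n x j c * Jv n x d j))
              = (\<Sum>d<n - 1. if d = c then dH n D q (phi_inv n x) d else 0)"
            using K3[OF x n] c nm by (intro sum.cong refl) auto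
          then show ?thesis using c by simp
        qed
        show ?thesis using inner by (intro sum.cong refl arg_cong2[where f=times]) auto
      qed
      also have "\<dots> = (\<Sum>a<n - 1. Jp n x i a * Ytilde n A q (phi_inv n x) a)"
        using P2a[OF diag inv] by (intro sum.cong refl) (simp add: sum_distrib_left mult_ac)
      also have "\<dots> = replicator n A x i / x (n - 1)" by (rule K4[OF x n m1 i eq])
      finally show "replicator n A x i / x (n - 1)
             = (let J = jacobian (phi n) (phi_inv n x) in
                (\<Sum>j<n. (\<Sum>a<n - 1. \<Sum>b<n - 1. \<Sum>c<n - 1. J i a * Bmat n A a b * C b c * J j c)
                         * partial_deriv (\<lambda>y. H_D n D q (phi_inv n y)) x j))" by (simp add: Let_def)
    qed
  qed
  show ?thesis using part1 part2 by blast
qed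

end
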